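(* Let $\mathcal{E}$ be the 2D Laplace equation $u_{xx}+u_{yy}=0$, with cotangent equation $\{u_{xx}+u_{yy}=0,\ p_{xx}+p_{yy}=0\}$. Then each of the following is a variational bivector on $\mathcal{E}$: $B_0=p$, $B_1=p_{yy}$, $B_2=p_{xy}$, $B_3=p_y+2(xp_{xy}+yp_{yy})$, $B_4=p_x+2(yp_{xy}-xp_{yy})$, $B_5=u_{yy}p_y-u_{xy}p_x+2(u_yp_{yy}-u_xp_{xy})$, $B_6=u_{yy}p_x+u_{xy}p_y+2(u_yp_{xy}+u_xp_{yy})$, $B_7=(u_y+xu_{xy}+yu_{yy})p_x+(u_x+yu_{xy}-xu_{yy})p_y+2(yu_x-xu_y)p_{yy}+2(xu_x+yu_y)p_{xy}$, $B_8=-(u_x+yu_{xy}-xu_{yy})p_x+(u_y+xu_{xy}+yu_{yy})p_y+2(xu_x+yu_y)p_{yy}-2(yu_x-xu_y)p_{xy}$.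
   Context: Setting: a scalar PDE $\mathcal{E}=\{F=0\}$ for one unknown $u(x^1,\dots,x^n)$, regarded as a submanifold of the infinite jet space with coordinates $x^i$, $u_\sigma$ ($\sigma$ a multi-index). $D_i$ are total derivatives, $D_\sigma$ their compositions. A $\mathcal{C}$-differential operator is an operator of the form $\sum_\sigma a^\sigma D_\sigma$ with smooth coefficients on the jet space (or on $\mathcal{E}$). The linearization is $\ell_F=\sum_\sigma \frac{\partial F}{\partial u_\sigma}D_\sigma$ and $\ell_{\mathcal{E}}$ its restriction to $\mathcal{E}$; $\Delta^*$ denotes the formal adjoint ($(\sum a^\sigma D_\sigma)^*=\sum(-1)^{|\sigma|}D_\sigma\circ a^\sigma$). The cotangent equation $\mathcal{T}^*\mathcal{E}$ is the system $\{F=0,\ \ell_F(p)=0\}$ (with all differential consequences), where $p$ is a new unknown of odd parity, so that all $p_\sigma$ are odd (anticommuting). Variational bivector: a $\mathcal{C}$-differential operator $H=\sum_\sigma h^\sigma D_\sigma$ on $\mathcal{E}$ such that (i) $\ell_{\mathcal{E}}(H_u)=0$ on $\mathcal{T}^*\mathcal{E}$, where $H_u=H(p)=\sum_\sigma h^\sigma p_\sigma$; and (ii) $H^*\circ\ell_{\mathcal{E}}^*=\ell_{\mathcal{E}}\circ H$ as operators on $\mathcal{E}$. Bivectors are identified with their functions $H_u$ (so "$B=\sum B_\sigma p_\sigma$" means $B=\sum B_\sigma D_\sigma$). *)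

theory Defs
  imports "HOL-Analysis.Analysis"
begin

text \<open>Coordinates of the (extended) infinite jet space: x, y, u_(i,j) = d^(i+j) u / dx^i dy^j,
  and p_(i,j). A point of the jet space is a real valuation of all coordinates.\<close>

datatype coord = CX | CY | CU nat nat | CP nat nat

type_synonym jpt = "coord \<Rightarrow> real"
type_synonym jfun = "jpt \<Rightarrow> real"

definition jx :: jfun where "jx \<xi> = \<xi> CX"
definition jy :: jfun where "jy \<xi> = \<xi> CY"
definition ju :: "nat \<Rightarrow> nat \<Rightarrow> jfun" where "ju i j \<xi> = \<xi> (CU i j)"
definition jp :: "nat \<Rightarrow> nat \<Rightarrow> jfun" where "jp i j \<xi> = \<xi> (CP i j)"

definition pd :: "coord \<Rightarrow> jfun \<Rightarrow> jfun" where
  "pd c f = (\<lambda>\<xi>. deriv (\<lambda>t. f (\<xi>(c := t))) (\<xi> c))"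

definition smooth_fn :: "jfun \<Rightarrow> bool" where
  "smooth_fn f \<longleftrightarrow>
     (\<exists>S. finite S \<and> (\<forall>\<xi> \<eta>. (\<forall>c\<in>S. \<xi> c = \<eta> c) \<longrightarrow> f \<xi> = f \<eta>)) \<and>
     (\<forall>cs. continuous_on UNIV (foldr pd cs f) \<and>
        (\<forall>c \<xi>. (\<lambda>t. foldr pd cs f (\<xi>(c := t))) differentiable (at (\<xi> c))))"

definition indep_p :: "jfun \<Rightarrow> bool" where
  "indep_p f \<longleftrightarrow> (\<forall>\<xi> \<eta>. (\<forall>c. (\<forall>i j. c \<noteq> CP i j) \<longrightarrow> \<xi> c = \<eta> c) \<longrightarrow> f \<xi> = f \<eta>)"

definition tdir_x :: "jpt \<Rightarrow> jpt" where
  "tdir_x \<xi> = (\<lambda>c. case c of CX \<Rightarrow> 1 | CY \<Rightarrow> 0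
                  | CU i j \<Rightarrow> \<xi> (CU (Suc i) j) | CP i j \<Rightarrow> \<xi> (CP (Suc i) j))"

definition tdir_y :: "jpt \<Rightarrow> jpt" where
  "tdir_y \<xi> = (\<lambda>c. case c of CX \<Rightarrow> 0 | CY \<Rightarrow> 1
                  | CU i j \<Rightarrow> \<xi> (CU i (Suc j)) | CP i j \<Rightarrow> \<xi> (CP i (Suc j)))"

text \<open>For smooth f (finitely many coordinates), the directional derivative along the
  prolonged direction equals D_x f = f_x + sum u_(sigma+x) f_(u_sigma) + sum p_(sigma+x) f_(p_sigma).\<close>
definition Dx :: "jfun \<Rightarrow> jfun" where
  "Dx f = (\<lambda>\<xi>. deriv (\<lambda>t. f (\<lambda>c. \<xi> c + t * tdir_x \<xi> c)) 0)"

definition Dy :: "jfun \<Rightarrow> jfun" where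
  "Dy f = (\<lambda>\<xi>. deriv (\<lambda>t. f (\<lambda>c. \<xi> c + t * tdir_y \<xi> c)) 0)"

definition Dsig :: "nat \<times> nat \<Rightarrow> jfun \<Rightarrow> jfun" where
  "Dsig \<sigma> f = (Dx ^^ fst \<sigma>) ((Dy ^^ snd \<sigma>) f)"

text \<open>An operator sum_sigma a^sigma D_sigma is given by its coefficient map.\<close>
type_synonym cdop = "nat \<times> nat \<Rightarrow> jfun"

definition opsupp :: "cdop \<Rightarrow> (nat \<times> nat) set" where
  "opsupp h = {\<sigma>. \<exists>\<xi>. h \<sigma> \<xi> \<noteq> 0}"

definition is_cdop :: "cdop \<Rightarrow> bool" where
  "is_cdop h \<longleftrightarrow> finite (opsupp h) \<and> (\<forall>\<sigma>. smooth_fn (h \<sigma>) \<and> indep_p (h \<sigma>))"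

definition apply_op :: "cdop \<Rightarrow> jfun \<Rightarrow> jfun" where
  "apply_op h f = (\<lambda>\<xi>. \<Sum>\<sigma>\<in>opsupp h. h \<sigma> \<xi> * Dsig \<sigma> f \<xi>)"

definition apply_adj :: "cdop \<Rightarrow> jfun \<Rightarrow> jfun" where
  "apply_adj h f = (\<lambda>\<xi>. \<Sum>\<sigma>\<in>opsupp h. (-1) ^ (fst \<sigma> + snd \<sigma>) * Dsig \<sigma> (\<lambda>\<eta>. h \<sigma> \<eta> * f \<eta>) \<xi>)"

definition lin :: "jfun \<Rightarrow> cdop" where
  "lin F = (\<lambda>\<sigma>. pd (CU (fst \<sigma>) (snd \<sigma>)) F)"

text \<open>The function p (so that D_sigma p = p_sigma); H_u = H(p).\<close>
definition pfun :: jfun where "pfun = jp 0 0"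

text \<open>Points of the infinite prolongation of E = {F = 0}.\<close>
definition onE :: "jfun \<Rightarrow> jpt \<Rightarrow> bool" where
  "onE F \<xi> \<longleftrightarrow> (\<forall>\<sigma>. Dsig \<sigma> F \<xi> = 0)"

text \<open>Points of the infinite prolongation of T^*E = {F = 0, ell_F(p) = 0}.\<close>
definition onTE :: "jfun \<Rightarrow> jpt \<Rightarrow> bool" where
  "onTE F \<xi> \<longleftrightarrow> (\<forall>\<sigma>. Dsig \<sigma> F \<xi> = 0 \<and> Dsig \<sigma> (apply_op (lin F) pfun) \<xi> = 0)"

definition var_bivector :: "jfun \<Rightarrow> cdop \<Rightarrow> bool" where
  "var_bivector F H \<longleftrightarrow>
     is_cdop H \<and>
     (\<forall>\<xi>. onTE F \<xi> \<longrightarrow> apply_op (lin F) (apply_op H pfun) \<xi> = 0) \<and>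
     (\<forall>\<phi>. smooth_fn \<phi> \<and> indep_p \<phi> \<longrightarrow>
        (\<forall>\<xi>. onE F \<xi> \<longrightarrow>
           apply_adj H (apply_adj (lin F) \<phi>) \<xi> = apply_op (lin F) (apply_op H \<phi>) \<xi>))"

definition laplace :: jfun where "laplace = (\<lambda>\<xi>. ju 2 0 \<xi> + ju 0 2 \<xi>)"

definition mkop :: "((nat \<times> nat) \<times> jfun) list \<Rightarrow> cdop" where
  "mkop ps = (\<lambda>\<sigma> \<xi>. \<Sum>(\<tau>, a)\<leftarrow>ps. if \<tau> = \<sigma> then a \<xi> else 0)"

text \<open>Multi-index (i,j) stands for D_x^i D_y^j; e.g. (1,1) is p_xy, (0,2) is p_yy.\<close>

definition B0 :: cdop where "B0 = mkop [((0,0), \<lambda>_. 1)]"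
definition B1 :: cdop where "B1 = mkop [((0,2), \<lambda>_. 1)]"
definition B2 :: cdop where "B2 = mkop [((1,1), \<lambda>_. 1)]"
definition B3 :: cdop where
  "B3 = mkop [((0,1), \<lambda>_. 1), ((1,1), \<lambda>\<xi>. 2 * jx \<xi>), ((0,2), \<lambda>\<xi>. 2 * jy \<xi>)]"
definition B4 :: cdop where
  "B4 = mkop [((1,0), \<lambda>_. 1), ((1,1), \<lambda>\<xi>. 2 * jy \<xi>), ((0,2), \<lambda>\<xi>. - 2 * jx \<xi>)]"
definition B5 :: cdop where
  "B5 = mkop [((0,1), \<lambda>\<xi>. ju 0 2 \<xi>), ((1,0), \<lambda>\<xi>. - ju 1 1 \<xi>),
              ((0,2), \<lambda>\<xi>. 2 * ju 0 1 \<xi>), ((1,1), \<lambda>\<xi>. - 2 * ju 1 0 \<xi>)]"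
definition B6 :: cdop where
  "B6 = mkop [((1,0), \<lambda>\<xi>. ju 0 2 \<xi>), ((0,1), \<lambda>\<xi>. ju 1 1 \<xi>),
              ((1,1), \<lambda>\<xi>. 2 * ju 0 1 \<xi>), ((0,2), \<lambda>\<xi>. 2 * ju 1 0 \<xi>)]"
definition B7 :: cdop where
  "B7 = mkop [((1,0), \<lambda>\<xi>. ju 0 1 \<xi> + jx \<xi> * ju 1 1 \<xi> + jy \<xi> * ju 0 2 \<xi>),
              ((0,1), \<lambda>\<xi>. ju 1 0 \<xi> + jy \<xi> * ju 1 1 \<xi> - jx \<xi> * ju 0 2 \<xi>),
              ((0,2), \<lambda>\<xi>. 2 * (jy \<xi> * ju 1 0 \<xi> - jx \<xi> * ju 0 1 \<xi>)),
              ((1,1), \<lambda>\<xi>. 2 * (jx \<xi> * ju 1 0 \<xi> + jy \<xi> * ju 0 1 \<xi>))]"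
definition B8 :: cdop where
  "B8 = mkop [((1,0), \<lambda>\<xi>. - (ju 1 0 \<xi> + jy \<xi> * ju 1 1 \<xi> - jx \<xi> * ju 0 2 \<xi>)),
              ((0,1), \<lambda>\<xi>. ju 0 1 \<xi> + jx \<xi> * ju 1 1 \<xi> + jy \<xi> * ju 0 2 \<xi>),
              ((0,2), \<lambda>\<xi>. 2 * (jx \<xi> * ju 1 0 \<xi> + jy \<xi> * ju 0 1 \<xi>)),
              ((1,1), \<lambda>\<xi>. - 2 * (jy \<xi> * ju 1 0 \<xi> - jx \<xi> * ju 0 1 \<xi>))]"

end

theory Submission
  imports Defs
begin


definition dep :: "coord set \<Rightarrow> jfun \<Rightarrow> bool" where
  "dep S f \<longleftrightarrow> (\<forall>\<xi> \<eta>. (\<forall>c\<in>S. \<xi> c = \<eta> c) \<longrightarrow> f \<xi> = f \<eta>)"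

definition pdiff :: "jfun \<Rightarrow> bool" where
  "pdiff f \<longleftrightarrow> (\<forall>c \<xi>. (\<lambda>t. f (\<xi>(c := t))) differentiable (at (\<xi> c)))"

definition Qf :: "jfun \<Rightarrow> bool" where
  "Qf f \<longleftrightarrow> continuous_on UNIV f \<and> pdiff f"

lemma smooth_fn_alt: "smooth_fn f \<longleftrightarrow> (\<exists>S. finite S \<and> dep S f) \<and> (\<forall>cs. Qf (foldr pd cs f))"
  unfolding smooth_fn_def dep_def Qf_def pdiff_def by blast

lemma pdiff_at:
  assumes "pdiff f"
  shows "((\<lambda>t. f (\<xi>(c := t))) has_real_derivative pd c f (\<xi>(c := t0))) (at t0)"
proof -
  let ?z = "\<xi>(c := t0)"
  have "(\<lambda>t. f (?z(c := t))) differentiable (at (?z c))" using assms unfolding pdiff_def by blast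
  then have "((\<lambda>t. f (?z(c := t))) has_real_derivative deriv (\<lambda>t. f (?z(c := t))) (?z c)) (at (?z c))"
    using DERIV_deriv_iff_real_differentiable by blast
  then show ?thesis by (simp add: pd_def)
qed

lemma pdiff_at':
  assumes "pdiff f"
  shows "((\<lambda>t. f (\<xi>(c := t))) has_real_derivative pd c f \<xi>) (at (\<xi> c))"
  using pdiff_at[OF assms, of \<xi> c "\<xi> c"] by simp

lemma pd_eqI:
  assumes "\<And>\<xi>. ((\<lambda>t. f (\<xi>(c := t))) has_real_derivative g \<xi>) (at (\<xi> c))"
  shows "pd c f = g"
  using assms unfolding pd_def by (auto intro!: ext DERIV_imp_deriv)

lemma pdiffI:
  assumes "\<And>c \<xi>. ((\<lambda>t. f (\<xi>(c := t))) has_real_derivative g c \<xi>) (at (\<xi> c))"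
  shows "pdiff f"
  using assms unfolding pdiff_def real_differentiable_def by blast

inductive_set PM :: "jfun set" where
  PMmult: "smooth_fn a \<Longrightarrow> smooth_fn b \<Longrightarrow> (\<lambda>\<xi>. a \<xi> * b \<xi>) \<in> PM"
| PMadd: "f \<in> PM \<Longrightarrow> g \<in> PM \<Longrightarrow> (\<lambda>\<xi>. f \<xi> + g \<xi>) \<in> PM"

lemma smooth_Q: "smooth_fn f \<Longrightarrow> Qf (foldr pd cs f)"
  unfolding smooth_fn_alt by blast

lemma smooth_cont: "smooth_fn f \<Longrightarrow> continuous_on UNIV f"
  using smooth_Q[of f "[]"] by (simp add: Qf_def)

lemma smooth_pdiff: "smooth_fn f \<Longrightarrow> pdiff f"
  using smooth_Q[of f "[]"] by (simp add: Qf_def)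

lemma dep_pd: "dep S f \<Longrightarrow> dep S (pd c f)"
  unfolding dep_def pd_def
proof (intro allI impI)
  fix \<xi> \<eta> :: jpt
  assume H: "\<forall>\<xi> \<eta>. (\<forall>c\<in>S. \<xi> c = \<eta> c) \<longrightarrow> f \<xi> = f \<eta>" and E: "\<forall>c\<in>S. \<xi> c = \<eta> c"
  show "deriv (\<lambda>t. f (\<xi>(c := t))) (\<xi> c) = deriv (\<lambda>t. f (\<eta>(c := t))) (\<eta> c)"
  proof (cases "c \<in> S")
    case True
    then have "(\<lambda>t. f (\<xi>(c := t))) = (\<lambda>t. f (\<eta>(c := t)))" using H E by (intro ext) (metis fun_upd_apply)
    then show ?thesis using True E by simp
  next
    case False
    then have "(\<lambda>t. f (\<xi>(c := t))) = (\<lambda>t. f \<xi>)" "(\<lambda>t. f (\<eta>(c := t))) = (\<lambda>t. f \<eta>)"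
      using H by (auto intro!: ext)
    then show ?thesis by simp
  qed
qed

lemma smooth_pd: "smooth_fn f \<Longrightarrow> smooth_fn (pd c f)"
  unfolding smooth_fn_alt
proof (intro conjI allI)
  assume A: "(\<exists>S. finite S \<and> dep S f) \<and> (\<forall>cs. Qf (foldr pd cs f))"
  then show "\<exists>S. finite S \<and> dep S (pd c f)" using dep_pd by blast
  fix cs
  show "Qf (foldr pd cs (pd c f))" using A[THEN conjunct2, rule_format, of "cs @ [c]"] by simp
qed

lemma dep_mono: "dep S f \<Longrightarrow> S \<subseteq> T \<Longrightarrow> dep T f"
  unfolding dep_def by blast

lemma dep_mult: "dep S a \<Longrightarrow> dep T b \<Longrightarrow> dep (S \<union> T) (\<lambda>\<xi>. a \<xi> * b \<xi>)"
  unfolding dep_def by (metis UnI1 UnI2)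

lemma dep_add: "dep S a \<Longrightarrow> dep T b \<Longrightarrow> dep (S \<union> T) (\<lambda>\<xi>. a \<xi> + b \<xi>)"
  unfolding dep_def by (metis UnI1 UnI2)

lemma PM_props: "f \<in> PM \<Longrightarrow> Qf f \<and> (\<exists>S. finite S \<and> dep S f) \<and> (\<forall>c. pd c f \<in> PM)"
proof (induction rule: PM.induct)
  case (PMmult a b)
  have pa: "pdiff a" and pb: "pdiff b" using PMmult smooth_pdiff by auto
  have "continuous_on UNIV (\<lambda>\<xi>. a \<xi> * b \<xi>)"
    using PMmult smooth_cont by (intro continuous_intros) auto
  moreover have D: "((\<lambda>t. a (\<xi>(c := t)) * b (\<xi>(c := t))) has_real_derivative
      pd c a \<xi> * b \<xi> + a \<xi> * pd c b \<xi>) (at (\<xi> c))" for c \<xi>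
    by (rule DERIV_cong[OF DERIV_mult[OF pdiff_at'[OF pa, of \<xi> c] pdiff_at'[OF pb, of \<xi> c]]]) simp
  moreover have "pdiff (\<lambda>\<xi>. a \<xi> * b \<xi>)"
    by (rule pdiffI[where g="\<lambda>c \<xi>. pd c a \<xi> * b \<xi> + a \<xi> * pd c b \<xi>"]) (use D in auto)
  moreover
  obtain Sa Sb where "finite Sa" "dep Sa a" "finite Sb" "dep Sb b" using PMmult unfolding smooth_fn_alt by blast
  then have "finite (Sa \<union> Sb) \<and> dep (Sa \<union> Sb) (\<lambda>\<xi>. a \<xi> * b \<xi>)" using dep_mult by blast
  moreover have "pd c (\<lambda>\<xi>. a \<xi> * b \<xi>) \<in> PM" for c
  proof -
    have "pd c (\<lambda>\<xi>. a \<xi> * b \<xi>) = (\<lambda>\<xi>. pd c a \<xi> * b \<xi> + a \<xi> * pd c b \<xi>)"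
      by (rule pd_eqI) (use D in auto)
    then show ?thesis using PMmult by (auto intro!: PM.intros smooth_pd)
  qed
  ultimately show ?case unfolding Qf_def by blast
next
  case (PMadd f g)
  have pa: "pdiff f" and pb: "pdiff g" using PMadd by (auto simp: Qf_def)
  have "continuous_on UNIV (\<lambda>\<xi>. f \<xi> + g \<xi>)"
    using PMadd by (intro continuous_intros) (auto simp: Qf_def)
  moreover have D: "((\<lambda>t. f (\<xi>(c := t)) + g (\<xi>(c := t))) has_real_derivative
      pd c f \<xi> + pd c g \<xi>) (at (\<xi> c))" for c \<xi>
    using DERIV_add[OF pdiff_at'[OF pa, of \<xi> c] pdiff_at'[OF pb, of \<xi> c]] by simp
  moreover have "pdiff (\<lambda>\<xi>. f \<xi> + g \<xi>)"
    by (rule pdiffI[where g="\<lambda>c \<xi>. pd c f \<xi> + pd c g \<xi>"]) (use D in auto)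
  moreover
  obtain Sa Sb where "finite Sa" "dep Sa f" "finite Sb" "dep Sb g" using PMadd by blast
  then have "finite (Sa \<union> Sb) \<and> dep (Sa \<union> Sb) (\<lambda>\<xi>. f \<xi> + g \<xi>)" using dep_add by blast
  moreover have "pd c (\<lambda>\<xi>. f \<xi> + g \<xi>) \<in> PM" for c
  proof -
    have "pd c (\<lambda>\<xi>. f \<xi> + g \<xi>) = (\<lambda>\<xi>. pd c f \<xi> + pd c g \<xi>)"
      by (rule pd_eqI) (use D in auto)
    then show ?thesis using PMadd by (auto intro!: PM.intros)
  qed
  ultimately show ?case unfolding Qf_def by blast
qed

lemma PM_smooth: "f \<in> PM \<Longrightarrow> smooth_fn f"
proof -
  assume f: "f \<in> PM"
  have "foldr pd cs f \<in> PM" for cs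
    using f by (induction cs) (auto dest: PM_props)
  then show ?thesis unfolding smooth_fn_alt using PM_props f by blast
qed

lemma smooth_mult: "smooth_fn a \<Longrightarrow> smooth_fn b \<Longrightarrow> smooth_fn (\<lambda>\<xi>. a \<xi> * b \<xi>)"
  by (rule PM_smooth) (rule PMmult)

lemma smooth_const: "smooth_fn (\<lambda>\<xi>. k)"
proof -
  have pd0: "pd c (\<lambda>\<xi>. k') = (\<lambda>\<xi>. 0)" for c k'
    by (rule pd_eqI) auto
  have "foldr pd cs (\<lambda>\<xi>. k) = (\<lambda>\<xi>. if cs = [] then k else 0)" for cs
    by (induction cs) (auto simp: pd0)
  moreover have "pdiff (\<lambda>\<xi>. k')" for k' :: real
    by (rule pdiffI[where g="\<lambda>_ _. 0"]) auto
  ultimately show ?thesis unfolding smooth_fn_alt Qf_def dep_def by auto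
qed

lemma smooth_add: "smooth_fn a \<Longrightarrow> smooth_fn b \<Longrightarrow> smooth_fn (\<lambda>\<xi>. a \<xi> + b \<xi>)"
proof -
  assume a: "smooth_fn a" and b: "smooth_fn b"
  have "(\<lambda>\<xi>. a \<xi> * 1) \<in> PM" by (rule PMmult[OF a smooth_const])
  moreover have "(\<lambda>\<xi>. b \<xi> * 1) \<in> PM" by (rule PMmult[OF b smooth_const])
  ultimately have "(\<lambda>\<xi>. a \<xi> * 1 + b \<xi> * 1) \<in> PM" by (rule PMadd)
  then show ?thesis using PM_smooth by simp
qed

lemma smooth_coord: "smooth_fn (\<lambda>\<xi>. \<xi> d)"
proof -
  have D: "((\<lambda>t. (\<xi>(c := t)) d) has_real_derivative (if c = d then 1 else 0)) (at (\<xi> c))" for c \<xi>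
    by (cases "c = d") auto
  have pd1: "pd c (\<lambda>\<xi>. \<xi> d) = (\<lambda>\<xi>. if c = d then 1 else 0)" for c
    by (rule pd_eqI) (use D in auto)
  have pdiff1: "pdiff (\<lambda>\<xi>. \<xi> d)"
    by (rule pdiffI[where g="\<lambda>c \<xi>. if c = d then 1 else 0"]) (use D in auto)
  have "foldr pd cs (\<lambda>\<xi>. \<xi> d) = (\<lambda>\<xi>. \<xi> d) \<or> (\<exists>k. foldr pd cs (\<lambda>\<xi>. \<xi> d) = (\<lambda>\<xi>. k))" for cs
  proof (induction cs)
    case Nil then show ?case by simp
  next
    case (Cons c cs)
    have pd0: "pd c (\<lambda>\<xi>. k') = (\<lambda>\<xi>. 0)" for c k'
      by (rule pd_eqI) auto
    from Cons show ?case by (auto simp: pd1 pd0)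
  qed
  moreover have "Qf (\<lambda>\<xi>. k)" for k
    using smooth_const[of k] smooth_Q[of _ "[]"] by fastforce
  moreover have "Qf (\<lambda>\<xi>. \<xi> d)" using pdiff1 by (simp add: Qf_def)
  moreover have "dep {d} (\<lambda>\<xi>. \<xi> d)" unfolding dep_def by auto
  ultimately show ?thesis unfolding smooth_fn_alt by (metis finite.emptyI finite.insertI)
qed

lemma smooth_scale: "smooth_fn a \<Longrightarrow> smooth_fn (\<lambda>\<xi>. k * a \<xi>)"
  using smooth_mult[OF smooth_const] by blast

lemma smooth_minus: "smooth_fn a \<Longrightarrow> smooth_fn (\<lambda>\<xi>. - a \<xi>)"
  using smooth_scale[of a "-1"] by simp

lemma smooth_diff: "smooth_fn a \<Longrightarrow> smooth_fn b \<Longrightarrow> smooth_fn (\<lambda>\<xi>. a \<xi> - b \<xi>)"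
  using smooth_add[OF _ smooth_minus, of a b] by simp

lemma smooth_sum: "finite I \<Longrightarrow> (\<And>i. i \<in> I \<Longrightarrow> smooth_fn (a i)) \<Longrightarrow> smooth_fn (\<lambda>\<xi>. \<Sum>i\<in>I. a i \<xi>)"
  by (induction I rule: finite_induct) (auto simp: smooth_const intro!: smooth_add)




definition line :: "jpt \<Rightarrow> jpt \<Rightarrow> real \<Rightarrow> jpt" where
  "line \<xi> v t = (\<lambda>c. \<xi> c + t * v c)"

definition rv :: "jpt \<Rightarrow> coord set \<Rightarrow> jpt" where
  "rv v T = (\<lambda>c. if c \<in> T then v c else 0)"

lemma chain_T:
  assumes pf: "pdiff f" and cf: "\<And>c. continuous_on UNIV (pd c f)" and T: "finite T"
  shows "((\<lambda>t. f (line \<xi> (rv v T) t)) has_real_derivative (\<Sum>c\<in>T. v c * pd c f \<xi>)) (at 0)"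
  using T
proof (induction T arbitrary: \<xi> rule: finite_induct)
  case empty
  have "line \<xi> (rv v {}) t = \<xi>" for t by (auto simp: line_def rv_def)
  then show ?case by simp
next
  case (insert a T)
  define P where "P s t = (line \<xi> (rv v T) s)(a := \<xi> a + t * v a)" for s t
  define G where "G s t = f (P s t)" for s t
  define DT where "DT = (\<Sum>c\<in>T. v c * pd c f \<xi>)"
  have Pline: "P t t = line \<xi> (rv v (insert a T)) t" for t
    using insert.hyps by (auto simp: P_def line_def rv_def)
  have P00: "P 0 0 = \<xi>" by (auto simp: P_def line_def)
  have Ps0: "P s 0 = line \<xi> (rv v T) s" for s
    using insert.hyps by (auto simp: P_def line_def rv_def)
  have fx: "((\<lambda>s. G s 0) has_derivative (*) DT) (at 0)"
    using insert.IH[of \<xi>] unfolding G_def Ps0 DT_def has_field_derivative_def .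
  have fy: "((\<lambda>t. G s t) has_derivative blinfun_apply (blinfun_mult_right (v a * pd a f (P s t)))) (at t)"
    for s t
  proof -
    have "((\<lambda>\<tau>. f ((line \<xi> (rv v T) s)(a := \<tau>))) has_real_derivative pd a f (P s t)) (at (\<xi> a + t * v a))"
      using pdiff_at[OF pf, of "line \<xi> (rv v T) s" a "\<xi> a + t * v a"] by (simp add: P_def)
    moreover have "((\<lambda>t. \<xi> a + t * v a) has_real_derivative v a) (at t)"
      by (auto intro!: derivative_eq_intros)
    ultimately have "((\<lambda>t. f ((line \<xi> (rv v T) s)(a := \<xi> a + t * v a))) has_real_derivative pd a f (P s t) * v a) (at t)"
      by (rule DERIV_chain2)
    then show ?thesis unfolding G_def P_def has_field_derivative_def by (simp add: mult.commute)
  qed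
  have contP: "continuous_on UNIV (\<lambda>(s, t). P s t)"
  proof (intro continuous_on_coordinatewise_then_product)
    fix i
    have e: "(\<lambda>x. (\<lambda>(s, t). P s t) x i) = (\<lambda>x. if i = a then \<xi> a + snd x * v a else \<xi> i + fst x * rv v T i)"
      by (auto simp: fun_eq_iff P_def line_def split: prod.splits)
    show "continuous_on UNIV (\<lambda>x. (\<lambda>(s, t). P s t) x i)"
      unfolding e by (cases "i = a") (auto intro!: continuous_intros)
  qed
  have "continuous_on UNIV (\<lambda>(s, t). v a * pd a f (P s t))"
  proof -
    have "continuous_on UNIV (\<lambda>st. pd a f ((\<lambda>(s, t). P s t) st))"
      by (rule continuous_on_compose2[OF cf contP]) auto
    then have "continuous_on UNIV (\<lambda>st. v a * pd a f ((\<lambda>(s, t). P s t) st))"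
      by (intro continuous_intros)
    moreover have "(\<lambda>st. v a * pd a f ((\<lambda>(s, t). P s t) st)) = (\<lambda>(s, t). v a * pd a f (P s t))"
      by (auto simp: fun_eq_iff)
    ultimately show ?thesis by metis
  qed
  then have "continuous (at (0::real, 0::real)) (\<lambda>(s, t). v a * pd a f (P s t))"
    by (simp add: continuous_on_eq_continuous_at)
  then have cont: "continuous (at (0::real, 0::real) within UNIV \<times> UNIV) (\<lambda>(s, t). blinfun_mult_right (v a * pd a f (P s t)))"
  proof -
    assume c0: "continuous (at (0::real, 0::real)) (\<lambda>(s, t). v a * pd a f (P s t))"
    have c1: "continuous (at (0::real, 0::real)) (\<lambda>st. blinfun_mult_right ((\<lambda>(s, t). v a * pd a f (P s t)) st))"
      by (rule bounded_linear.continuous[OF bounded_linear_blinfun_mult_right c0])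
    have eq: "(\<lambda>st. blinfun_mult_right ((\<lambda>(s, t). v a * pd a f (P s t)) st)) = (\<lambda>(s, t). blinfun_mult_right (v a * pd a f (P s t)))"
      by (auto simp: fun_eq_iff)
    show ?thesis using c1 unfolding eq by simp
  qed
  have "((\<lambda>(s, t). G s t) has_derivative (\<lambda>(tx, ty). DT * tx + blinfun_apply (blinfun_mult_right (v a * pd a f (P 0 0))) ty)) (at (0, 0) within UNIV \<times> UNIV)"
    by (rule has_derivative_partialsI[OF fx[THEN has_derivative_at_withinI] fy[THEN has_derivative_at_withinI] cont]) auto
  then have D2: "((\<lambda>(s, t). G s t) has_derivative (\<lambda>(tx, ty). DT * tx + v a * pd a f \<xi> * ty)) (at (0, 0))"
    by (simp add: P00)
  have Dd: "((\<lambda>t. (t, t)) has_derivative (\<lambda>h. (h, h))) (at (0::real))"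
    by (auto intro!: derivative_eq_intros)
  have "((\<lambda>t. (\<lambda>(s, t). G s t) (t, t)) has_derivative (\<lambda>h. (\<lambda>(tx, ty). DT * tx + v a * pd a f \<xi> * ty) (h, h))) (at 0)"
    using has_derivative_compose[OF Dd D2] by simp
  moreover have "(\<lambda>h. (\<lambda>(tx, ty). DT * tx + v a * pd a f \<xi> * ty) (h, h)) = (*) (DT + v a * pd a f \<xi>)"
    by (auto simp: fun_eq_iff algebra_simps)
  ultimately have "((\<lambda>t. G t t) has_derivative (*) (DT + v a * pd a f \<xi>)) (at 0)"
    by simp
  then show ?case
    unfolding has_field_derivative_def G_def Pline DT_def using insert.hyps by (simp add: add.commute)
qed

lemma chain_S:
  assumes "smooth_fn f" "dep S f" "finite S"
  shows "((\<lambda>t. f (line \<xi> v t)) has_real_derivative (\<Sum>c\<in>S. v c * pd c f \<xi>)) (at 0)"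
proof -
  have "f (line \<xi> v t) = f (line \<xi> (rv v S) t)" for t
    using assms(2) unfolding dep_def line_def rv_def by auto
  moreover have "continuous_on UNIV (pd c f)" for c
    using smooth_Q[OF assms(1), of "[c]"] by (simp add: Qf_def)
  ultimately show ?thesis
    using chain_T[OF smooth_pdiff[OF assms(1)] _ assms(3)] by simp
qed

lemma smooth_depE:
  assumes "smooth_fn f" obtains S where "finite S" "dep S f"
  using assms unfolding smooth_fn_alt by blast

lemma smooth_line_deriv:
  assumes "smooth_fn f"
  shows "((\<lambda>t. f (line \<xi> v t)) has_real_derivative deriv (\<lambda>t. f (line \<xi> v t)) 0) (at 0)"
proof -
  obtain S where "finite S" "dep S f" using smooth_depE[OF assms] .
  then show ?thesis using chain_S[OF assms] DERIV_imp_deriv by metis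
qed

lemma Dx_line: "Dx f \<xi> = deriv (\<lambda>t. f (line \<xi> (tdir_x \<xi>) t)) 0"
  unfolding Dx_def line_def ..
lemma Dy_line: "Dy f \<xi> = deriv (\<lambda>t. f (line \<xi> (tdir_y \<xi>) t)) 0"
  unfolding Dy_def line_def ..

lemma line0[simp]: "line \<xi> v 0 = \<xi>" by (simp add: line_def)

lemma Dx_has: "smooth_fn f \<Longrightarrow> ((\<lambda>t. f (line \<xi> (tdir_x \<xi>) t)) has_real_derivative Dx f \<xi>) (at 0)"
  unfolding Dx_line by (rule smooth_line_deriv)
lemma Dy_has: "smooth_fn f \<Longrightarrow> ((\<lambda>t. f (line \<xi> (tdir_y \<xi>) t)) has_real_derivative Dy f \<xi>) (at 0)"
  unfolding Dy_line by (rule smooth_line_deriv)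

lemma Dx_formula: "smooth_fn f \<Longrightarrow> dep S f \<Longrightarrow> finite S \<Longrightarrow> Dx f = (\<lambda>\<xi>. \<Sum>c\<in>S. tdir_x \<xi> c * pd c f \<xi>)"
  by (rule ext, unfold Dx_line) (rule DERIV_imp_deriv, rule chain_S)
lemma Dy_formula: "smooth_fn f \<Longrightarrow> dep S f \<Longrightarrow> finite S \<Longrightarrow> Dy f = (\<lambda>\<xi>. \<Sum>c\<in>S. tdir_y \<xi> c * pd c f \<xi>)"
  by (rule ext, unfold Dy_line) (rule DERIV_imp_deriv, rule chain_S)




lemma smooth_pdiff_pd: "smooth_fn f \<Longrightarrow> pdiff (pd c f)"
  using smooth_pdiff[OF smooth_pd] .

lemma smooth_cont_pd: "smooth_fn f \<Longrightarrow> continuous_on UNIV (pd d (pd c f))"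
  using smooth_cont[OF smooth_pd[OF smooth_pd]] .

lemma mvt_rect:
  assumes pf: "pdiff f" and pf2: "pdiff (pd c f)" and cd: "c \<noteq> d" and h: "h > 0"
  shows "\<exists>s1 t1. a \<le> s1 \<and> s1 \<le> a + h \<and> b \<le> t1 \<and> t1 \<le> b + h \<and>
     f (\<xi>(c := a + h, d := b + h)) - f (\<xi>(c := a + h, d := b)) - f (\<xi>(c := a, d := b + h)) + f (\<xi>(c := a, d := b))
       = h * h * pd d (pd c f) (\<xi>(c := s1, d := t1))"
proof -
  define \<phi> where "\<phi> s = f (\<xi>(c := s, d := b + h)) - f (\<xi>(c := s, d := b))" for s
  have D\<phi>: "DERIV \<phi> s :> pd c f (\<xi>(c := s, d := b + h)) - pd c f (\<xi>(c := s, d := b))" for s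
  proof -
    have e: "\<xi>(c := s', d := t) = (\<xi>(d := t))(c := s')" for s' t using cd by (simp add: fun_upd_twist)
    have g: "DERIV (\<lambda>s. f ((\<xi>(d := t))(c := s))) s :> pd c f ((\<xi>(d := t))(c := s))" for t
      using pdiff_at[OF pf, of "\<xi>(d := t)" c s] by simp
    show ?thesis unfolding \<phi>_def e
      by (intro DERIV_diff g)
  qed
  obtain s1 where s1: "a < s1" "s1 < a + h" "\<phi> (a + h) - \<phi> a = (a + h - a) * (pd c f (\<xi>(c := s1, d := b + h)) - pd c f (\<xi>(c := s1, d := b)))"
    using MVT2[of a "a + h" \<phi>, OF _ D\<phi>] h by auto
  define \<psi> where "\<psi> t = pd c f (\<xi>(c := s1, d := t))" for t
  have D\<psi>: "DERIV \<psi> t :> pd d (pd c f) (\<xi>(c := s1, d := t))" for t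
    unfolding \<psi>_def using pdiff_at[OF pf2, of "\<xi>(c := s1)" d t] by simp
  obtain t1 where t1: "b < t1" "t1 < b + h" "\<psi> (b + h) - \<psi> b = (b + h - b) * pd d (pd c f) (\<xi>(c := s1, d := t1))"
    using MVT2[of b "b + h" \<psi>, OF _ D\<psi>] h by auto
  show ?thesis
    apply (rule exI[of _ s1], rule exI[of _ t1])
    using s1 t1 by (auto simp: \<phi>_def \<psi>_def algebra_simps)
qed

lemma cont_Q:
  fixes F :: jfun and \<xi> :: jpt and a b :: real
  assumes "continuous_on UNIV F"
  shows "continuous (at (a, b)) (\<lambda>(s, t). F (\<xi>(c := s, d := t)))"
proof -
  have contP: "continuous_on UNIV (\<lambda>(s::real, t::real). \<xi>(c := s, d := t))"
  proof (intro continuous_on_coordinatewise_then_product)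
    fix i
    have e: "(\<lambda>x. (\<lambda>(s::real, t::real). \<xi>(c := s, d := t)) x i) = (\<lambda>x. if i = d then snd x else if i = c then fst x else \<xi> i)"
      by (auto simp: fun_eq_iff split: prod.splits)
    show "continuous_on UNIV (\<lambda>x. (\<lambda>(s::real, t::real). \<xi>(c := s, d := t)) x i)"
      unfolding e by (cases "i = d"; cases "i = c") (auto intro!: continuous_intros)
  qed
  have "continuous_on UNIV (\<lambda>st. F ((\<lambda>(s, t). \<xi>(c := s, d := t)) st))"
    by (rule continuous_on_compose2[OF assms contP]) auto
  moreover have "(\<lambda>st. F ((\<lambda>(s, t). \<xi>(c := s, d := t)) st)) = (\<lambda>(s, t). F (\<xi>(c := s, d := t)))"
    by (auto simp: fun_eq_iff)
  ultimately show ?thesis by (metis continuous_on_eq_continuous_at open_UNIV UNIV_I)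
qed

lemma clairaut:
  assumes sf: "smooth_fn f"
  shows "pd c (pd d f) = pd d (pd c f)"
proof (cases "c = d")
  case True then show ?thesis by simp
next
  case cd: False
  show ?thesis
  proof (rule ext)
    fix \<xi> :: jpt
    let ?a = "\<xi> c" and ?b = "\<xi> d"
    define F1 where "F1 = pd d (pd c f)"
    define F2 where "F2 = pd c (pd d f)"
    have Q0: "\<xi>(c := ?a, d := ?b) = \<xi>" by simp
    have c1: "continuous (at (?a, ?b)) (\<lambda>(s, t). F1 (\<xi>(c := s, d := t)))"
      unfolding F1_def by (rule cont_Q[OF smooth_cont_pd[OF sf]])
    have c2: "continuous (at (?a, ?b)) (\<lambda>(s, t). F2 (\<xi>(c := s, d := t)))"
      unfolding F2_def by (rule cont_Q[OF smooth_cont_pd[OF sf]])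
    have "\<forall>e>0. \<bar>F2 \<xi> - F1 \<xi>\<bar> < 2 * e"
    proof (intro allI impI)
      fix e :: real assume e: "e > 0"
      show "\<bar>F2 \<xi> - F1 \<xi>\<bar> < 2 * e"
    proof -
      have "\<exists>\<delta>>0. \<forall>x'. dist x' (?a, ?b) < \<delta> \<longrightarrow> dist ((\<lambda>(s, t). F1 (\<xi>(c := s, d := t))) x') ((\<lambda>(s, t). F1 (\<xi>(c := s, d := t))) (?a, ?b)) < e"
        using c1 e unfolding continuous_at_eps_delta by blast
      then obtain d1 where d1: "d1 > 0" "\<And>x'. dist x' (?a, ?b) < d1 \<Longrightarrow> dist ((\<lambda>(s, t). F1 (\<xi>(c := s, d := t))) x') (F1 \<xi>) < e"
        by auto
      have "\<exists>\<delta>>0. \<forall>x'. dist x' (?a, ?b) < \<delta> \<longrightarrow> dist ((\<lambda>(s, t). F2 (\<xi>(c := s, d := t))) x') ((\<lambda>(s, t). F2 (\<xi>(c := s, d := t))) (?a, ?b)) < e"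
        using c2 e unfolding continuous_at_eps_delta by blast
      then obtain d2 where d2: "d2 > 0" "\<And>x'. dist x' (?a, ?b) < d2 \<Longrightarrow> dist ((\<lambda>(s, t). F2 (\<xi>(c := s, d := t))) x') (F2 \<xi>) < e"
        by auto
      define h where "h = min d1 d2 / 3"
      have h: "h > 0" using d1 d2 by (simp add: h_def)
      have close: "dist (s, t) (?a, ?b) < min d1 d2" if "?a \<le> s" "s \<le> ?a + h" "?b \<le> t" "t \<le> ?b + h" for s t
      proof -
        have "dist (s, t) (?a, ?b) = sqrt ((s - ?a)\<^sup>2 + (t - ?b)\<^sup>2)"
          by (simp add: dist_Pair_Pair dist_real_def)
        also have "\<dots> \<le> \<bar>s - ?a\<bar> + \<bar>t - ?b\<bar>" by (rule sqrt_sum_squares_le_sum_abs)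
        also have "\<dots> \<le> 2 * h" using that by auto
        also have "\<dots> < min d1 d2" using h d1(1) d2(1) unfolding h_def by linarith
        finally show ?thesis .
      qed
      obtain s1 t1 where st1: "?a \<le> s1" "s1 \<le> ?a + h" "?b \<le> t1" "t1 \<le> ?b + h"
        "f (\<xi>(c := ?a + h, d := ?b + h)) - f (\<xi>(c := ?a + h, d := ?b)) - f (\<xi>(c := ?a, d := ?b + h)) + f (\<xi>(c := ?a, d := ?b))
          = h * h * F1 (\<xi>(c := s1, d := t1))"
        using mvt_rect[OF smooth_pdiff[OF sf] smooth_pdiff_pd[OF sf] cd h, of ?a ?b \<xi>] unfolding F1_def by blast
      obtain t2 s2 where st2: "?b \<le> t2" "t2 \<le> ?b + h" "?a \<le> s2" "s2 \<le> ?a + h"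
        "f (\<xi>(d := ?b + h, c := ?a + h)) - f (\<xi>(d := ?b + h, c := ?a)) - f (\<xi>(d := ?b, c := ?a + h)) + f (\<xi>(d := ?b, c := ?a))
          = h * h * F2 (\<xi>(d := t2, c := s2))"
        using mvt_rect[OF smooth_pdiff[OF sf] smooth_pdiff_pd[OF sf] cd[symmetric] h, of ?b ?a \<xi>] unfolding F2_def by blast
      have sw: "\<xi>(d := t, c := s) = \<xi>(c := s, d := t)" for s t using cd by (simp add: fun_upd_twist)
      have "h * h * F1 (\<xi>(c := s1, d := t1)) = h * h * F2 (\<xi>(c := s2, d := t2))"
        using st1(5) st2(5) unfolding sw by (simp add: algebra_simps)
      then have eq: "F1 (\<xi>(c := s1, d := t1)) = F2 (\<xi>(c := s2, d := t2))" using h by simp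
      have "dist (F1 (\<xi>(c := s1, d := t1))) (F1 \<xi>) < e"
        using d1(2)[of "(s1, t1)"] close[of s1 t1] st1 by simp
      moreover have "dist (F2 (\<xi>(c := s2, d := t2))) (F2 \<xi>) < e"
        using d2(2)[of "(s2, t2)"] close[of s2 t2] st2 by simp
      ultimately show ?thesis using eq by (simp add: dist_real_def)
    qed
    qed
    then have "F2 \<xi> = F1 \<xi>"
    proof (rule contrapos_pp)
      assume ne: "F2 \<xi> \<noteq> F1 \<xi>"
      then have "\<bar>F2 \<xi> - F1 \<xi>\<bar> / 4 > 0" by simp
      moreover have "\<not> (\<bar>F2 \<xi> - F1 \<xi>\<bar> < 2 * (\<bar>F2 \<xi> - F1 \<xi>\<bar> / 4))" by simp
      ultimately show "\<not> (\<forall>e>0. \<bar>F2 \<xi> - F1 \<xi>\<bar> < 2 * e)" by blast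
    qed
    then show "pd c (pd d f) \<xi> = pd d (pd c f) \<xi>" by (simp add: F1_def F2_def)
  qed
qed




definition TD :: "(jpt \<Rightarrow> jpt) \<Rightarrow> jfun \<Rightarrow> jfun" where
  "TD v f = (\<lambda>\<xi>. deriv (\<lambda>t. f (line \<xi> (v \<xi>) t)) 0)"

lemma Dx_TD: "Dx = TD tdir_x"
  by (auto simp: fun_eq_iff Dx_def TD_def line_def)
lemma Dy_TD: "Dy = TD tdir_y"
  by (auto simp: fun_eq_iff Dy_def TD_def line_def)

lemma TD_eqI: "(\<And>\<xi>. ((\<lambda>t. F (line \<xi> (v \<xi>) t)) has_real_derivative G \<xi>) (at 0)) \<Longrightarrow> TD v F = G"
  by (rule ext) (simp add: TD_def DERIV_imp_deriv)

lemma TD_has: "smooth_fn f \<Longrightarrow> ((\<lambda>t. f (line \<xi> (v \<xi>) t)) has_real_derivative TD v f \<xi>) (at 0)"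
  unfolding TD_def by (rule smooth_line_deriv)

lemma TD_add: "smooth_fn f \<Longrightarrow> smooth_fn g \<Longrightarrow> TD v (\<lambda>\<xi>. f \<xi> + g \<xi>) = (\<lambda>\<xi>. TD v f \<xi> + TD v g \<xi>)"
  by (rule TD_eqI) (rule DERIV_add[OF TD_has TD_has])

lemma TD_diff: "smooth_fn f \<Longrightarrow> smooth_fn g \<Longrightarrow> TD v (\<lambda>\<xi>. f \<xi> - g \<xi>) = (\<lambda>\<xi>. TD v f \<xi> - TD v g \<xi>)"
  by (rule TD_eqI) (rule DERIV_diff[OF TD_has TD_has])

lemma TD_minus: "smooth_fn f \<Longrightarrow> TD v (\<lambda>\<xi>. - f \<xi>) = (\<lambda>\<xi>. - TD v f \<xi>)"
  by (rule TD_eqI) (rule DERIV_minus[OF TD_has])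

lemma TD_mult: "smooth_fn f \<Longrightarrow> smooth_fn g \<Longrightarrow> TD v (\<lambda>\<xi>. f \<xi> * g \<xi>) = (\<lambda>\<xi>. TD v f \<xi> * g \<xi> + f \<xi> * TD v g \<xi>)"
  by (rule TD_eqI) (rule DERIV_cong[OF DERIV_mult[OF TD_has TD_has]], simp_all)

lemma TD_const: "TD v (\<lambda>\<xi>. k) = (\<lambda>\<xi>. 0)"
  by (rule TD_eqI) simp

lemma TD_coord: "TD v (\<lambda>\<xi>. \<xi> c) = (\<lambda>\<xi>. v \<xi> c)"
  by (rule TD_eqI) (auto simp: line_def intro!: derivative_eq_intros)

lemma TD_sum: "finite I \<Longrightarrow> (\<And>i. i \<in> I \<Longrightarrow> smooth_fn (a i)) \<Longrightarrow>
    TD v (\<lambda>\<xi>. \<Sum>i\<in>I. a i \<xi>) = (\<lambda>\<xi>. \<Sum>i\<in>I. TD v (a i) \<xi>)"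
proof (induction I rule: finite_induct)
  case empty then show ?case by (simp add: TD_const)
next
  case (insert x F)
  have "TD v (\<lambda>\<xi>. \<Sum>i\<in>insert x F. a i \<xi>) = TD v (\<lambda>\<xi>. a x \<xi> + (\<Sum>i\<in>F. a i \<xi>))"
    using insert.hyps by simp
  also have "\<dots> = (\<lambda>\<xi>. TD v (a x) \<xi> + TD v (\<lambda>\<xi>. \<Sum>i\<in>F. a i \<xi>) \<xi>)"
    using insert.prems insert.hyps by (intro TD_add smooth_sum) auto
  finally show ?case using insert by simp
qed

lemma TD_formula: "smooth_fn f \<Longrightarrow> dep S f \<Longrightarrow> finite S \<Longrightarrow> TD v f = (\<lambda>\<xi>. \<Sum>c\<in>S. v \<xi> c * pd c f \<xi>)"
  by (rule TD_eqI) (rule chain_S)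

lemma smooth_TD:
  assumes "smooth_fn f" "\<And>c. smooth_fn (\<lambda>\<xi>. v \<xi> c)"
  shows "smooth_fn (TD v f)"
proof -
  obtain S where S: "finite S" "dep S f" using smooth_depE[OF assms(1)] .
  show ?thesis unfolding TD_formula[OF assms(1) S(2) S(1)]
    using S assms by (intro smooth_sum smooth_mult smooth_pd) auto
qed

lemma smooth_tdir_x: "smooth_fn (\<lambda>\<xi>. tdir_x \<xi> c)"
  by (cases c) (simp_all add: tdir_x_def smooth_const smooth_coord)
lemma smooth_tdir_y: "smooth_fn (\<lambda>\<xi>. tdir_y \<xi> c)"
  by (cases c) (simp_all add: tdir_y_def smooth_const smooth_coord)

lemma smooth_Dx: "smooth_fn f \<Longrightarrow> smooth_fn (Dx f)"
  unfolding Dx_TD by (rule smooth_TD[OF _ smooth_tdir_x])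
lemma smooth_Dy: "smooth_fn f \<Longrightarrow> smooth_fn (Dy f)"
  unfolding Dy_TD by (rule smooth_TD[OF _ smooth_tdir_y])

lemma tdir_comm: "TD tdir_x (\<lambda>\<xi>. tdir_y \<xi> c) = TD tdir_y (\<lambda>\<xi>. tdir_x \<xi> c)"
proof (cases c)
  case CX then show ?thesis by (simp add: tdir_x_def tdir_y_def TD_const)
next
  case CY then show ?thesis by (simp add: tdir_x_def tdir_y_def TD_const)
next
  case (CU i j) then show ?thesis by (simp add: tdir_x_def tdir_y_def TD_coord)
next
  case (CP i j) then show ?thesis by (simp add: tdir_x_def tdir_y_def TD_coord)
qed

lemma Dx_Dy_comm:
  assumes sf: "smooth_fn f"
  shows "Dx (Dy f) = Dy (Dx f)"
proof -
  obtain S where S: "finite S" "dep S f" using smooth_depE[OF sf] .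
  let ?X = "\<lambda>c \<xi>. tdir_x \<xi> c" and ?Y = "\<lambda>c \<xi>. tdir_y \<xi> c"
  have spd: "smooth_fn (pd c f)" for c using smooth_pd[OF sf] .
  have dpd: "dep S (pd c f)" for c using dep_pd[OF S(2)] .
  have "TD tdir_x (TD tdir_y f) = TD tdir_x (\<lambda>\<xi>. \<Sum>c\<in>S. ?Y c \<xi> * pd c f \<xi>)"
    by (simp add: TD_formula[OF sf S(2) S(1)])
  also have "\<dots> = (\<lambda>\<xi>. \<Sum>c\<in>S. TD tdir_x (\<lambda>\<xi>. ?Y c \<xi> * pd c f \<xi>) \<xi>)"
    using S spd smooth_tdir_y by (intro TD_sum smooth_mult) auto
  also have "\<dots> = (\<lambda>\<xi>. \<Sum>c\<in>S. TD tdir_x (?Y c) \<xi> * pd c f \<xi> + ?Y c \<xi> * (\<Sum>d\<in>S. ?X d \<xi> * pd d (pd c f) \<xi>))"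
    using TD_mult[OF smooth_tdir_y spd] TD_formula[OF spd dpd S(1)] by simp
  finally have L: "TD tdir_x (TD tdir_y f) = \<dots>" .
  have "TD tdir_y (TD tdir_x f) = TD tdir_y (\<lambda>\<xi>. \<Sum>c\<in>S. ?X c \<xi> * pd c f \<xi>)"
    by (simp add: TD_formula[OF sf S(2) S(1)])
  also have "\<dots> = (\<lambda>\<xi>. \<Sum>c\<in>S. TD tdir_y (\<lambda>\<xi>. ?X c \<xi> * pd c f \<xi>) \<xi>)"
    using S spd smooth_tdir_x by (intro TD_sum smooth_mult) auto
  also have "\<dots> = (\<lambda>\<xi>. \<Sum>c\<in>S. TD tdir_y (?X c) \<xi> * pd c f \<xi> + ?X c \<xi> * (\<Sum>d\<in>S. ?Y d \<xi> * pd d (pd c f) \<xi>))"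
    using TD_mult[OF smooth_tdir_x spd] TD_formula[OF spd dpd S(1)] by simp
  finally have R: "TD tdir_y (TD tdir_x f) = \<dots>" .
  have swap: "(\<Sum>c\<in>S. ?Y c \<xi> * (\<Sum>d\<in>S. ?X d \<xi> * pd d (pd c f) \<xi>)) =
              (\<Sum>c\<in>S. ?X c \<xi> * (\<Sum>d\<in>S. ?Y d \<xi> * pd d (pd c f) \<xi>))" for \<xi>
  proof -
    have "(\<Sum>c\<in>S. ?Y c \<xi> * (\<Sum>d\<in>S. ?X d \<xi> * pd d (pd c f) \<xi>)) = (\<Sum>c\<in>S. \<Sum>d\<in>S. ?Y c \<xi> * ?X d \<xi> * pd d (pd c f) \<xi>)"
      by (simp add: sum_distrib_left mult.assoc)
    also have "\<dots> = (\<Sum>d\<in>S. \<Sum>c\<in>S. ?Y c \<xi> * ?X d \<xi> * pd d (pd c f) \<xi>)"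
      by (rule sum.swap)
    also have "\<dots> = (\<Sum>d\<in>S. \<Sum>c\<in>S. ?X d \<xi> * (?Y c \<xi> * pd c (pd d f) \<xi>))"
      using clairaut[OF sf] by (simp add: algebra_simps)
    also have "\<dots> = (\<Sum>d\<in>S. ?X d \<xi> * (\<Sum>c\<in>S. ?Y c \<xi> * pd c (pd d f) \<xi>))"
      by (simp add: sum_distrib_left)
    finally show ?thesis .
  qed
  show ?thesis unfolding Dx_TD Dy_TD L R
    by (rule ext) (simp add: sum.distrib swap tdir_comm)
qed




section \<open>Calculus rules for Dx, Dy\<close>

lemma Dx_add: "smooth_fn f \<Longrightarrow> smooth_fn g \<Longrightarrow> Dx (\<lambda>\<xi>. f \<xi> + g \<xi>) = (\<lambda>\<xi>. Dx f \<xi> + Dx g \<xi>)"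
  unfolding Dx_TD by (rule TD_add)
lemma Dy_add: "smooth_fn f \<Longrightarrow> smooth_fn g \<Longrightarrow> Dy (\<lambda>\<xi>. f \<xi> + g \<xi>) = (\<lambda>\<xi>. Dy f \<xi> + Dy g \<xi>)"
  unfolding Dy_TD by (rule TD_add)
lemma Dx_diff: "smooth_fn f \<Longrightarrow> smooth_fn g \<Longrightarrow> Dx (\<lambda>\<xi>. f \<xi> - g \<xi>) = (\<lambda>\<xi>. Dx f \<xi> - Dx g \<xi>)"
  unfolding Dx_TD by (rule TD_diff)
lemma Dy_diff: "smooth_fn f \<Longrightarrow> smooth_fn g \<Longrightarrow> Dy (\<lambda>\<xi>. f \<xi> - g \<xi>) = (\<lambda>\<xi>. Dy f \<xi> - Dy g \<xi>)"
  unfolding Dy_TD by (rule TD_diff)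
lemma Dx_minus: "smooth_fn f \<Longrightarrow> Dx (\<lambda>\<xi>. - f \<xi>) = (\<lambda>\<xi>. - Dx f \<xi>)"
  unfolding Dx_TD by (rule TD_minus)
lemma Dy_minus: "smooth_fn f \<Longrightarrow> Dy (\<lambda>\<xi>. - f \<xi>) = (\<lambda>\<xi>. - Dy f \<xi>)"
  unfolding Dy_TD by (rule TD_minus)
lemma Dx_mult: "smooth_fn f \<Longrightarrow> smooth_fn g \<Longrightarrow> Dx (\<lambda>\<xi>. f \<xi> * g \<xi>) = (\<lambda>\<xi>. Dx f \<xi> * g \<xi> + f \<xi> * Dx g \<xi>)"
  unfolding Dx_TD by (rule TD_mult)
lemma Dy_mult: "smooth_fn f \<Longrightarrow> smooth_fn g \<Longrightarrow> Dy (\<lambda>\<xi>. f \<xi> * g \<xi>) = (\<lambda>\<xi>. Dy f \<xi> * g \<xi> + f \<xi> * Dy g \<xi>)"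
  unfolding Dy_TD by (rule TD_mult)
lemma Dx_const: "Dx (\<lambda>\<xi>. k) = (\<lambda>\<xi>. 0)"
  unfolding Dx_TD by (rule TD_const)
lemma Dy_const: "Dy (\<lambda>\<xi>. k) = (\<lambda>\<xi>. 0)"
  unfolding Dy_TD by (rule TD_const)

lemma jx_eta: "jx = (\<lambda>\<xi>. \<xi> CX)" by (simp add: fun_eq_iff jx_def)
lemma jy_eta: "jy = (\<lambda>\<xi>. \<xi> CY)" by (simp add: fun_eq_iff jy_def)
lemma ju_eta: "ju i j = (\<lambda>\<xi>. \<xi> (CU i j))" by (simp add: fun_eq_iff ju_def)
lemma jp_eta: "jp i j = (\<lambda>\<xi>. \<xi> (CP i j))" by (simp add: fun_eq_iff jp_def)

lemma Dx_jx: "Dx jx = (\<lambda>\<xi>. 1)" unfolding Dx_TD jx_eta TD_coord by (simp add: tdir_x_def)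
lemma Dy_jx: "Dy jx = (\<lambda>\<xi>. 0)" unfolding Dy_TD jx_eta TD_coord by (simp add: tdir_y_def)
lemma Dx_jy: "Dx jy = (\<lambda>\<xi>. 0)" unfolding Dx_TD jy_eta TD_coord by (simp add: tdir_x_def)
lemma Dy_jy: "Dy jy = (\<lambda>\<xi>. 1)" unfolding Dy_TD jy_eta TD_coord by (simp add: tdir_y_def)
lemma Dx_ju: "Dx (ju i j) = ju (i + 1) j" unfolding Dx_TD ju_eta TD_coord by (simp add: tdir_x_def)
lemma Dy_ju: "Dy (ju i j) = ju i (j + 1)" unfolding Dy_TD ju_eta TD_coord by (simp add: tdir_y_def)
lemma Dx_jp: "Dx (jp i j) = jp (i + 1) j" unfolding Dx_TD jp_eta TD_coord by (simp add: tdir_x_def)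
lemma Dy_jp: "Dy (jp i j) = jp i (j + 1)" unfolding Dy_TD jp_eta TD_coord by (simp add: tdir_y_def)

lemma smooth_jx: "smooth_fn jx" unfolding jx_eta by (rule smooth_coord)
lemma smooth_jy: "smooth_fn jy" unfolding jy_eta by (rule smooth_coord)
lemma smooth_ju: "smooth_fn (ju i j)" unfolding ju_eta by (rule smooth_coord)
lemma smooth_jp: "smooth_fn (jp i j)" unfolding jp_eta by (rule smooth_coord)

lemma Dy_Dx: "smooth_fn f \<Longrightarrow> Dy (Dx f) = Dx (Dy f)"
  using Dx_Dy_comm by simp

lemmas Drules = Dx_add Dy_add Dx_diff Dy_diff Dx_minus Dy_minus Dx_mult Dy_mult Dx_const Dy_const
  Dx_jx Dy_jx Dx_jy Dy_jy Dx_ju Dy_ju Dx_jp Dy_jp Dy_Dx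
lemmas Srules = smooth_add smooth_diff smooth_minus smooth_mult smooth_const smooth_jx smooth_jy smooth_ju smooth_jp
  smooth_Dx smooth_Dy

lemma Dsig_simps:
  "Dsig (0,0) f = f" "Dsig (1,0) f = Dx f" "Dsig (0,1) f = Dy f" "Dsig (1,1) f = Dx (Dy f)"
  "Dsig (2,0) f = Dx (Dx f)" "Dsig (0,2) f = Dy (Dy f)"
  by (simp_all add: Dsig_def numeral_2_eq_2)

lemma funpow_const0: "(D ^^ n) (\<lambda>\<xi>. 0) = (\<lambda>\<xi>. 0)" if "D (\<lambda>\<xi>. 0) = (\<lambda>\<xi>. 0)" for D :: "jfun \<Rightarrow> jfun"
  using that by (induction n) auto

lemma Dsig_zero: "Dsig \<sigma> (\<lambda>\<xi>. 0) = (\<lambda>\<xi>. 0)"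
  unfolding Dsig_def by (simp add: funpow_const0 Dx_const Dy_const)

lemma apply_op_super:
  assumes "finite A" "opsupp h \<subseteq> A"
  shows "apply_op h f = (\<lambda>\<xi>. \<Sum>\<sigma>\<in>A. h \<sigma> \<xi> * Dsig \<sigma> f \<xi>)"
proof (rule ext)
  fix \<xi>
  show "apply_op h f \<xi> = (\<Sum>\<sigma>\<in>A. h \<sigma> \<xi> * Dsig \<sigma> f \<xi>)"
    unfolding apply_op_def
    by (rule sum.mono_neutral_left[OF assms(1) assms(2)]) (auto simp: opsupp_def)
qed

lemma apply_adj_super:
  assumes "finite A" "opsupp h \<subseteq> A"
  shows "apply_adj h f = (\<lambda>\<xi>. \<Sum>\<sigma>\<in>A. (-1) ^ (fst \<sigma> + snd \<sigma>) * Dsig \<sigma> (\<lambda>\<eta>. h \<sigma> \<eta> * f \<eta>) \<xi>)"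
proof (rule ext)
  fix \<xi>
  have z: "\<sigma> \<notin> opsupp h \<Longrightarrow> (\<lambda>\<eta>. h \<sigma> \<eta> * f \<eta>) = (\<lambda>\<eta>. 0)" for \<sigma>
    by (auto simp: opsupp_def)
  show "apply_adj h f \<xi> = (\<Sum>\<sigma>\<in>A. (-1) ^ (fst \<sigma> + snd \<sigma>) * Dsig \<sigma> (\<lambda>\<eta>. h \<sigma> \<eta> * f \<eta>) \<xi>)"
    unfolding apply_adj_def
    by (rule sum.mono_neutral_left[OF assms(1) assms(2)]) (auto simp: z Dsig_zero)
qed

lemma mkop_Nil: "mkop [] = (\<lambda>\<sigma> \<xi>. 0)" by (simp add: mkop_def fun_eq_iff)
lemma mkop_Cons: "mkop ((\<tau>, a) # ps) = (\<lambda>\<sigma> \<xi>. (if \<tau> = \<sigma> then a \<xi> else 0) + mkop ps \<sigma> \<xi>)"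
  by (simp add: mkop_def fun_eq_iff)

lemma opsupp_mkop: "opsupp (mkop ps) \<subseteq> fst ` set ps"
proof
  fix \<sigma> assume "\<sigma> \<in> opsupp (mkop ps)"
  then obtain \<xi> where "mkop ps \<sigma> \<xi> \<noteq> 0" by (auto simp: opsupp_def)
  then show "\<sigma> \<in> fst ` set ps"
  proof (induction ps)
    case Nil then show ?case by (simp add: mkop_Nil)
  next
    case (Cons p ps) then show ?case by (cases p) (auto simp: mkop_Cons split: if_splits)
  qed
qed

lemma smooth_if: "smooth_fn a \<Longrightarrow> smooth_fn (\<lambda>\<xi>. if P then a \<xi> else 0)"
  by (cases P) (simp_all add: smooth_const)

lemma mkop_good: "(\<And>\<tau> a. (\<tau>, a) \<in> set ps \<Longrightarrow> smooth_fn a \<and> indep_p a) \<Longrightarrow> smooth_fn (mkop ps \<sigma>) \<and> indep_p (mkop ps \<sigma>)"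
proof (induction ps)
  case Nil then show ?case by (simp add: mkop_Nil smooth_const indep_p_def)
next
  case (Cons p ps)
  obtain \<tau> a where p: "p = (\<tau>, a)" by (cases p)
  have a: "smooth_fn a" "indep_p a" using Cons.prems[of \<tau> a] p by auto
  have r: "smooth_fn (mkop ps \<sigma>) \<and> indep_p (mkop ps \<sigma>)" using Cons by auto
  have "smooth_fn (\<lambda>\<xi>. (if \<tau> = \<sigma> then a \<xi> else 0) + mkop ps \<sigma> \<xi>)"
    using a r by (intro smooth_add smooth_if) auto
  moreover have "indep_p (\<lambda>\<xi>. (if \<tau> = \<sigma> then a \<xi> else 0) + mkop ps \<sigma> \<xi>)"
    using a r unfolding indep_p_def by (metis (no_types, lifting))
  ultimately show ?case by (simp add: p mkop_Cons)
qed

lemma is_cdop_mkop: "(\<And>\<tau> a. (\<tau>, a) \<in> set ps \<Longrightarrow> smooth_fn a \<and> indep_p a) \<Longrightarrow> is_cdop (mkop ps)"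
  unfolding is_cdop_def using mkop_good opsupp_mkop by (meson finite_imageI finite_set finite_subset)

section \<open>Laplace\<close>

lemma pd_laplace: "pd c laplace = (\<lambda>\<xi>. if c = CU 2 0 \<or> c = CU 0 2 then 1 else 0)"
proof (rule pd_eqI)
  fix \<xi>
  show "((\<lambda>t. laplace (\<xi>(c := t))) has_real_derivative (if c = CU 2 0 \<or> c = CU 0 2 then 1 else 0)) (at (\<xi> c))"
    by (cases "c = CU 2 0"; cases "c = CU 0 2") (auto simp: laplace_def ju_def intro!: derivative_eq_intros)
qed

lemma lin_laplace: "lin laplace = (\<lambda>\<sigma> \<xi>. if \<sigma> = (2,0) \<or> \<sigma> = (0,2) then 1 else 0)"
  by (auto simp: fun_eq_iff lin_def pd_laplace)

lemma opsupp_lin: "opsupp (lin laplace) \<subseteq> {(2,0),(0,2)}"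
  by (auto simp: opsupp_def lin_laplace split: if_splits)

lemma adj_lin: "apply_adj (lin laplace) \<phi> = (\<lambda>\<xi>. Dx (Dx \<phi>) \<xi> + Dy (Dy \<phi>) \<xi>)"
  by (subst apply_adj_super[OF _ opsupp_lin]) (simp_all add: lin_laplace Dsig_simps)

lemma op_lin: "apply_op (lin laplace) g = (\<lambda>\<xi>. Dx (Dx g) \<xi> + Dy (Dy g) \<xi>)"
  by (subst apply_op_super[OF _ opsupp_lin]) (simp_all add: lin_laplace Dsig_simps)

lemma funpow_ju_y: "(Dy ^^ n) (ju a b) = ju a (b + n)"
  by (induction n) (simp_all add: Dy_ju)
lemma funpow_ju_x: "(Dx ^^ n) (ju a b) = ju (a + n) b"
  by (induction n) (simp_all add: Dx_ju)
lemma funpow_jp_y: "(Dy ^^ n) (jp a b) = jp a (b + n)"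
  by (induction n) (simp_all add: Dy_jp)
lemma funpow_jp_x: "(Dx ^^ n) (jp a b) = jp (a + n) b"
  by (induction n) (simp_all add: Dx_jp)

lemma funpow_smooth: "smooth_fn f \<Longrightarrow> (\<And>g. smooth_fn g \<Longrightarrow> smooth_fn (D g)) \<Longrightarrow> smooth_fn ((D ^^ n) f)"
  by (induction n) auto

lemma funpow_add:
  assumes "\<And>f g. smooth_fn f \<Longrightarrow> smooth_fn g \<Longrightarrow> D (\<lambda>\<xi>. f \<xi> + g \<xi>) = (\<lambda>\<xi>. D f \<xi> + D g \<xi>)"
    "\<And>g. smooth_fn g \<Longrightarrow> smooth_fn (D g)" "smooth_fn f" "smooth_fn g"
  shows "(D ^^ n) (\<lambda>\<xi>. f \<xi> + g \<xi>) = (\<lambda>\<xi>. (D ^^ n) f \<xi> + (D ^^ n) g \<xi>)"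
proof (induction n)
  case 0 then show ?case by simp
next
  case (Suc n)
  then show ?case using assms funpow_smooth[of f D n] funpow_smooth[of g D n] by simp
qed

lemma Dsig_ju2: "Dsig (i, j) (\<lambda>\<xi>. ju a b \<xi> + ju c d \<xi>) = (\<lambda>\<xi>. ju (a + i) (b + j) \<xi> + ju (c + i) (d + j) \<xi>)"
  unfolding Dsig_def
  by (simp add: funpow_add[of Dy] funpow_add[of Dx] Dy_add Dx_add smooth_Dx smooth_Dy smooth_ju funpow_ju_x funpow_ju_y funpow_smooth)

lemma Dsig_jp2: "Dsig (i, j) (\<lambda>\<xi>. jp a b \<xi> + jp c d \<xi>) = (\<lambda>\<xi>. jp (a + i) (b + j) \<xi> + jp (c + i) (d + j) \<xi>)"
  unfolding Dsig_def
  by (simp add: funpow_add[of Dy] funpow_add[of Dx] Dy_add Dx_add smooth_Dx smooth_Dy smooth_jp funpow_jp_x funpow_jp_y funpow_smooth)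

lemma onE_rel:
  assumes "onE laplace \<xi>" "2 \<le> i"
  shows "ju i j \<xi> = - ju (i - 2) (j + 2) \<xi>"
proof -
  have "Dsig (i - 2, j) laplace \<xi> = 0" using assms(1) by (simp add: onE_def)
  moreover have e: "Suc (Suc (i - 2)) = i" using assms(2) by arith
  ultimately show ?thesis unfolding laplace_def Dsig_ju2 by (simp add: e eq_neg_iff_add_eq_0)
qed

lemma onTE_E: "onTE laplace \<xi> \<Longrightarrow> onE laplace \<xi>"
  by (simp add: onTE_def onE_def)

lemma pfun_eq: "apply_op (lin laplace) pfun = (\<lambda>\<xi>. jp 2 0 \<xi> + jp 0 2 \<xi>)"
  unfolding op_lin pfun_def by (simp add: Dx_jp Dy_jp numeral_2_eq_2)

lemma onTE_rel:
  assumes "onTE laplace \<xi>" "2 \<le> i"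
  shows "jp i j \<xi> = - jp (i - 2) (j + 2) \<xi>"
proof -
  have "Dsig (i - 2, j) (apply_op (lin laplace) pfun) \<xi> = 0" using assms(1) by (simp add: onTE_def)
  moreover have e: "Suc (Suc (i - 2)) = i" using assms(2) by arith
  ultimately show ?thesis unfolding pfun_eq Dsig_jp2 by (simp add: e eq_neg_iff_add_eq_0)
qed

lemma varbiv_intro:
  assumes "is_cdop H"
    "\<And>\<xi>. onTE laplace \<xi> \<Longrightarrow> Dx (Dx (apply_op H pfun)) \<xi> + Dy (Dy (apply_op H pfun)) \<xi> = 0"
    "\<And>\<phi> \<xi>. smooth_fn \<phi> \<Longrightarrow> onE laplace \<xi> \<Longrightarrow>
       apply_adj H (\<lambda>\<xi>. Dx (Dx \<phi>) \<xi> + Dy (Dy \<phi>) \<xi>) \<xi> = Dx (Dx (apply_op H \<phi>)) \<xi> + Dy (Dy (apply_op H \<phi>)) \<xi>"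
  shows "var_bivector laplace H"
  unfolding var_bivector_def adj_lin op_lin using assms by blast

lemma pfun_simps: "pfun = jp 0 0" by (simp add: pfun_def)




lemma apply_op_mkop: "apply_op (mkop ps) f = (\<lambda>\<xi>. \<Sum>\<sigma>\<in>fst ` set ps. mkop ps \<sigma> \<xi> * Dsig \<sigma> f \<xi>)"
  by (rule apply_op_super[OF _ opsupp_mkop]) simp
lemma apply_adj_mkop: "apply_adj (mkop ps) f = (\<lambda>\<xi>. \<Sum>\<sigma>\<in>fst ` set ps. (-1) ^ (fst \<sigma> + snd \<sigma>) * Dsig \<sigma> (\<lambda>\<eta>. mkop ps \<sigma> \<eta> * f \<eta>) \<xi>)"
  by (rule apply_adj_super[OF _ opsupp_mkop]) simp

lemma indep_jx: "indep_p jx" by (auto simp: indep_p_def jx_def)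
lemma indep_jy: "indep_p jy" by (auto simp: indep_p_def jy_def)
lemma indep_ju: "indep_p (ju i j)" by (auto simp: indep_p_def ju_def)
lemma indep_const: "indep_p (\<lambda>\<xi>. k)" by (auto simp: indep_p_def)
lemma indep_add: "indep_p f \<Longrightarrow> indep_p g \<Longrightarrow> indep_p (\<lambda>\<xi>. f \<xi> + g \<xi>)"
  unfolding indep_p_def by metis
lemma indep_diff: "indep_p f \<Longrightarrow> indep_p g \<Longrightarrow> indep_p (\<lambda>\<xi>. f \<xi> - g \<xi>)"
  unfolding indep_p_def by metis
lemma indep_mult: "indep_p f \<Longrightarrow> indep_p g \<Longrightarrow> indep_p (\<lambda>\<xi>. f \<xi> * g \<xi>)"
  unfolding indep_p_def by metis
lemma indep_minus: "indep_p f \<Longrightarrow> indep_p (\<lambda>\<xi>. - f \<xi>)"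
  unfolding indep_p_def by metis
lemmas Irules = indep_jx indep_jy indep_ju indep_const indep_add indep_diff indep_mult indep_minus

lemma Dsig_jp: "Dsig (i, j) (jp a b) = jp (a + i) (b + j)"
  by (simp add: Dsig_def funpow_jp_x funpow_jp_y)

lemma Dsig_simps2:
  "Dsig (Suc 0,0) f = Dx f" "Dsig (0,Suc 0) f = Dy f" "Dsig (Suc 0,Suc 0) f = Dx (Dy f)"
  "Dsig (Suc (Suc 0),0) f = Dx (Dx f)" "Dsig (0,Suc (Suc 0)) f = Dy (Dy f)"
  by (simp_all add: Dsig_def)

lemma B0_biv: "var_bivector laplace B0"
proof (rule varbiv_intro)
  show "is_cdop B0" unfolding B0_def
    by (rule is_cdop_mkop) (auto simp: Srules Irules)
next
  fix \<xi> assume T: "onTE laplace \<xi>"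
  note E = onTE_E[OF T]
  show "Dx (Dx (apply_op B0 pfun)) \<xi> + Dy (Dy (apply_op B0 pfun)) \<xi> = 0"
    unfolding B0_def apply_op_mkop
    apply (simp add: mkop_Cons mkop_Nil Dsig_jp Dsig_simps Dsig_simps2 pfun_simps Drules Srules)
    apply (simp add: onE_rel[OF E] onTE_rel[OF T])?
    apply (simp add: algebra_simps numeral_eq_Suc)?
    done
next
  fix \<phi> \<xi> assume S: "smooth_fn \<phi>" and E: "onE laplace \<xi>"
  show "apply_adj B0 (\<lambda>\<xi>. Dx (Dx \<phi>) \<xi> + Dy (Dy \<phi>) \<xi>) \<xi> = Dx (Dx (apply_op B0 \<phi>)) \<xi> + Dy (Dy (apply_op B0 \<phi>)) \<xi>"
    unfolding B0_def apply_op_mkop apply_adj_mkop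
    apply (simp add: mkop_Cons mkop_Nil Dsig_simps Dsig_simps2 Drules Srules S)
    apply (simp add: onE_rel[OF E])?
    apply (simp add: algebra_simps numeral_eq_Suc)?
    done
qed

lemma B1_biv: "var_bivector laplace B1"
proof (rule varbiv_intro)
  show "is_cdop B1" unfolding B1_def
    by (rule is_cdop_mkop) (auto simp: Srules Irules)
next
  fix \<xi> assume T: "onTE laplace \<xi>"
  note E = onTE_E[OF T]
  show "Dx (Dx (apply_op B1 pfun)) \<xi> + Dy (Dy (apply_op B1 pfun)) \<xi> = 0"
    unfolding B1_def apply_op_mkop
    apply (simp add: mkop_Cons mkop_Nil Dsig_jp Dsig_simps Dsig_simps2 pfun_simps Drules Srules)
    apply (simp add: onE_rel[OF E] onTE_rel[OF T])?
    apply (simp add: algebra_simps numeral_eq_Suc)?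
    done
next
  fix \<phi> \<xi> assume S: "smooth_fn \<phi>" and E: "onE laplace \<xi>"
  show "apply_adj B1 (\<lambda>\<xi>. Dx (Dx \<phi>) \<xi> + Dy (Dy \<phi>) \<xi>) \<xi> = Dx (Dx (apply_op B1 \<phi>)) \<xi> + Dy (Dy (apply_op B1 \<phi>)) \<xi>"
    unfolding B1_def apply_op_mkop apply_adj_mkop
    apply (simp add: mkop_Cons mkop_Nil Dsig_simps Dsig_simps2 Drules Srules S)
    apply (simp add: onE_rel[OF E])?
    apply (simp add: algebra_simps numeral_eq_Suc)?
    done
qed

lemma B2_biv: "var_bivector laplace B2"
proof (rule varbiv_intro)
  show "is_cdop B2" unfolding B2_def
    by (rule is_cdop_mkop) (auto simp: Srules Irules)
next
  fix \<xi> assume T: "onTE laplace \<xi>"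
  note E = onTE_E[OF T]
  show "Dx (Dx (apply_op B2 pfun)) \<xi> + Dy (Dy (apply_op B2 pfun)) \<xi> = 0"
    unfolding B2_def apply_op_mkop
    apply (simp add: mkop_Cons mkop_Nil Dsig_jp Dsig_simps Dsig_simps2 pfun_simps Drules Srules)
    apply (simp add: onE_rel[OF E] onTE_rel[OF T])?
    apply (simp add: algebra_simps numeral_eq_Suc)?
    done
next
  fix \<phi> \<xi> assume S: "smooth_fn \<phi>" and E: "onE laplace \<xi>"
  show "apply_adj B2 (\<lambda>\<xi>. Dx (Dx \<phi>) \<xi> + Dy (Dy \<phi>) \<xi>) \<xi> = Dx (Dx (apply_op B2 \<phi>)) \<xi> + Dy (Dy (apply_op B2 \<phi>)) \<xi>"
    unfolding B2_def apply_op_mkop apply_adj_mkop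
    apply (simp add: mkop_Cons mkop_Nil Dsig_simps Dsig_simps2 Drules Srules S)
    apply (simp add: onE_rel[OF E])?
    apply (simp add: algebra_simps numeral_eq_Suc)?
    done
qed

lemma B3_biv: "var_bivector laplace B3"
proof (rule varbiv_intro)
  show "is_cdop B3" unfolding B3_def
    by (rule is_cdop_mkop) (auto simp: Srules Irules)
next
  fix \<xi> assume T: "onTE laplace \<xi>"
  note E = onTE_E[OF T]
  show "Dx (Dx (apply_op B3 pfun)) \<xi> + Dy (Dy (apply_op B3 pfun)) \<xi> = 0"
    unfolding B3_def apply_op_mkop
    apply (simp add: mkop_Cons mkop_Nil Dsig_jp Dsig_simps Dsig_simps2 pfun_simps Drules Srules)
    apply (simp add: onE_rel[OF E] onTE_rel[OF T])?
    apply (simp add: algebra_simps numeral_eq_Suc)?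
    done
next
  fix \<phi> \<xi> assume S: "smooth_fn \<phi>" and E: "onE laplace \<xi>"
  show "apply_adj B3 (\<lambda>\<xi>. Dx (Dx \<phi>) \<xi> + Dy (Dy \<phi>) \<xi>) \<xi> = Dx (Dx (apply_op B3 \<phi>)) \<xi> + Dy (Dy (apply_op B3 \<phi>)) \<xi>"
    unfolding B3_def apply_op_mkop apply_adj_mkop
    apply (simp add: mkop_Cons mkop_Nil Dsig_simps Dsig_simps2 Drules Srules S)
    apply (simp add: onE_rel[OF E])?
    apply (simp add: algebra_simps numeral_eq_Suc)?
    done
qed

lemma B4_biv: "var_bivector laplace B4"
proof (rule varbiv_intro)
  show "is_cdop B4" unfolding B4_def
    by (rule is_cdop_mkop) (auto simp: Srules Irules)
next
  fix \<xi> assume T: "onTE laplace \<xi>"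
  note E = onTE_E[OF T]
  show "Dx (Dx (apply_op B4 pfun)) \<xi> + Dy (Dy (apply_op B4 pfun)) \<xi> = 0"
    unfolding B4_def apply_op_mkop
    apply (simp add: mkop_Cons mkop_Nil Dsig_jp Dsig_simps Dsig_simps2 pfun_simps Drules Srules)
    apply (simp add: onE_rel[OF E] onTE_rel[OF T])?
    apply (simp add: algebra_simps numeral_eq_Suc)?
    done
next
  fix \<phi> \<xi> assume S: "smooth_fn \<phi>" and E: "onE laplace \<xi>"
  show "apply_adj B4 (\<lambda>\<xi>. Dx (Dx \<phi>) \<xi> + Dy (Dy \<phi>) \<xi>) \<xi> = Dx (Dx (apply_op B4 \<phi>)) \<xi> + Dy (Dy (apply_op B4 \<phi>)) \<xi>"
    unfolding B4_def apply_op_mkop apply_adj_mkop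
    apply (simp add: mkop_Cons mkop_Nil Dsig_simps Dsig_simps2 Drules Srules S)
    apply (simp add: onE_rel[OF E])?
    apply (simp add: algebra_simps numeral_eq_Suc)?
    done
qed

lemma B5_biv: "var_bivector laplace B5"
proof (rule varbiv_intro)
  show "is_cdop B5" unfolding B5_def
    by (rule is_cdop_mkop) (auto simp: Srules Irules)
next
  fix \<xi> assume T: "onTE laplace \<xi>"
  note E = onTE_E[OF T]
  show "Dx (Dx (apply_op B5 pfun)) \<xi> + Dy (Dy (apply_op B5 pfun)) \<xi> = 0"
    unfolding B5_def apply_op_mkop
    apply (simp add: mkop_Cons mkop_Nil Dsig_jp Dsig_simps Dsig_simps2 pfun_simps Drules Srules)
    apply (simp add: onE_rel[OF E] onTE_rel[OF T])?
    apply (simp add: algebra_simps numeral_eq_Suc)?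
    done
next
  fix \<phi> \<xi> assume S: "smooth_fn \<phi>" and E: "onE laplace \<xi>"
  show "apply_adj B5 (\<lambda>\<xi>. Dx (Dx \<phi>) \<xi> + Dy (Dy \<phi>) \<xi>) \<xi> = Dx (Dx (apply_op B5 \<phi>)) \<xi> + Dy (Dy (apply_op B5 \<phi>)) \<xi>"
    unfolding B5_def apply_op_mkop apply_adj_mkop
    apply (simp add: mkop_Cons mkop_Nil Dsig_simps Dsig_simps2 Drules Srules S)
    apply (simp add: onE_rel[OF E])?
    apply (simp add: algebra_simps numeral_eq_Suc)?
    done
qed

lemma B6_biv: "var_bivector laplace B6"
proof (rule varbiv_intro)
  show "is_cdop B6" unfolding B6_def
    by (rule is_cdop_mkop) (auto simp: Srules Irules)
next
  fix \<xi> assume T: "onTE laplace \<xi>"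
  note E = onTE_E[OF T]
  show "Dx (Dx (apply_op B6 pfun)) \<xi> + Dy (Dy (apply_op B6 pfun)) \<xi> = 0"
    unfolding B6_def apply_op_mkop
    apply (simp add: mkop_Cons mkop_Nil Dsig_jp Dsig_simps Dsig_simps2 pfun_simps Drules Srules)
    apply (simp add: onE_rel[OF E] onTE_rel[OF T])?
    apply (simp add: algebra_simps numeral_eq_Suc)?
    done
next
  fix \<phi> \<xi> assume S: "smooth_fn \<phi>" and E: "onE laplace \<xi>"
  show "apply_adj B6 (\<lambda>\<xi>. Dx (Dx \<phi>) \<xi> + Dy (Dy \<phi>) \<xi>) \<xi> = Dx (Dx (apply_op B6 \<phi>)) \<xi> + Dy (Dy (apply_op B6 \<phi>)) \<xi>"
    unfolding B6_def apply_op_mkop apply_adj_mkop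
    apply (simp add: mkop_Cons mkop_Nil Dsig_simps Dsig_simps2 Drules Srules S)
    apply (simp add: onE_rel[OF E])?
    apply (simp add: algebra_simps numeral_eq_Suc)?
    done
qed

lemma B7_biv: "var_bivector laplace B7"
proof (rule varbiv_intro)
  show "is_cdop B7" unfolding B7_def
    by (rule is_cdop_mkop) (auto simp: Srules Irules)
next
  fix \<xi> assume T: "onTE laplace \<xi>"
  note E = onTE_E[OF T]
  show "Dx (Dx (apply_op B7 pfun)) \<xi> + Dy (Dy (apply_op B7 pfun)) \<xi> = 0"
    unfolding B7_def apply_op_mkop
    apply (simp add: mkop_Cons mkop_Nil Dsig_jp Dsig_simps Dsig_simps2 pfun_simps Drules Srules)
    apply (simp add: onE_rel[OF E] onTE_rel[OF T])?
    apply (simp add: algebra_simps numeral_eq_Suc)?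
    done
next
  fix \<phi> \<xi> assume S: "smooth_fn \<phi>" and E: "onE laplace \<xi>"
  show "apply_adj B7 (\<lambda>\<xi>. Dx (Dx \<phi>) \<xi> + Dy (Dy \<phi>) \<xi>) \<xi> = Dx (Dx (apply_op B7 \<phi>)) \<xi> + Dy (Dy (apply_op B7 \<phi>)) \<xi>"
    unfolding B7_def apply_op_mkop apply_adj_mkop
    apply (simp add: mkop_Cons mkop_Nil Dsig_simps Dsig_simps2 Drules Srules S)
    apply (simp add: onE_rel[OF E])?
    apply (simp add: algebra_simps numeral_eq_Suc)?
    done
qed

lemma B8_biv: "var_bivector laplace B8"
proof (rule varbiv_intro)
  show "is_cdop B8" unfolding B8_def
    by (rule is_cdop_mkop) (auto simp: Srules Irules)
next
  fix \<xi> assume T: "onTE laplace \<xi>"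
  note E = onTE_E[OF T]
  show "Dx (Dx (apply_op B8 pfun)) \<xi> + Dy (Dy (apply_op B8 pfun)) \<xi> = 0"
    unfolding B8_def apply_op_mkop
    apply (simp add: mkop_Cons mkop_Nil Dsig_jp Dsig_simps Dsig_simps2 pfun_simps Drules Srules)
    apply (simp add: onE_rel[OF E] onTE_rel[OF T])?
    apply (simp add: algebra_simps numeral_eq_Suc)?
    done
next
  fix \<phi> \<xi> assume S: "smooth_fn \<phi>" and E: "onE laplace \<xi>"
  show "apply_adj B8 (\<lambda>\<xi>. Dx (Dx \<phi>) \<xi> + Dy (Dy \<phi>) \<xi>) \<xi> = Dx (Dx (apply_op B8 \<phi>)) \<xi> + Dy (Dy (apply_op B8 \<phi>)) \<xi>"
    unfolding B8_def apply_op_mkop apply_adj_mkop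
    apply (simp add: mkop_Cons mkop_Nil Dsig_simps Dsig_simps2 Drules Srules S)
    apply (simp add: onE_rel[OF E])?
    apply (simp add: algebra_simps numeral_eq_Suc)?
    done
qed




theorem mainTheorem3:
  shows "var_bivector laplace B0 \<and> var_bivector laplace B1 \<and> var_bivector laplace B2 \<and>
         var_bivector laplace B3 \<and> var_bivector laplace B4 \<and> var_bivector laplace B5 \<and>
         var_bivector laplace B6 \<and> var_bivector laplace B7 \<and> var_bivector laplace B8"
  using B0_biv B1_biv B2_biv B3_biv B4_biv B5_biv B6_biv B7_biv B8_biv by blast

end
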